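(* Let $A$ be a ring and $b,s,t\in A$. (a) If $t\in\bigcap_{i\ge0}(bA+s^iA)$, then $W(b,s,t)=\bigcap_{i\ge0}(bA+s^iA)$. (b) If $bA+sA+tA=A$, or if $b,s,t$ is an $A$-regular sequence, then $W(b,s,t)=\bigcap_{i\ge0}(bA+sA)^i$.
   Context: For elements $b,s,t$ of a ring $A$, define ideals $W_i,J_i$ ($i\ge0$) by $W_0=A$, $J_0=(W_0:t)=A$, and for $i\ge1$: $W_i=bJ_{i-1}+s^iA$ and $J_i=(W_i:t)$, where $(W:t)=\{x\in A: tx\in W\}$. Set $W(b,s,t)=\bigcap_{i\ge0}W_i$. *)

theory Defs
  imports Main
begin

definition colon :: "'a::comm_ring_1 set \<Rightarrow> 'a \<Rightarrow> 'a set" where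
  "colon W t = {x. t * x \<in> W}"

fun Wseq :: "'a::comm_ring_1 \<Rightarrow> 'a \<Rightarrow> 'a \<Rightarrow> nat \<Rightarrow> 'a set" where
  "Wseq b s t 0 = UNIV"
| "Wseq b s t (Suc i) =
     {b * x + s ^ (Suc i) * y | x y. x \<in> colon (Wseq b s t i) t}"

definition Wbst :: "'a::comm_ring_1 \<Rightarrow> 'a \<Rightarrow> 'a \<Rightarrow> 'a set" where
  "Wbst b s t = (\<Inter>i. Wseq b s t i)"

inductive_set ideal_gen :: "'a::comm_ring_1 set \<Rightarrow> 'a set" for S where
  zero: "0 \<in> ideal_gen S"
| add: "x \<in> ideal_gen S \<Longrightarrow> y \<in> ideal_gen S \<Longrightarrow> x + y \<in> ideal_gen S"
| mult: "x \<in> S \<Longrightarrow> r * x \<in> ideal_gen S"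

definition ideal_prod :: "'a::comm_ring_1 set \<Rightarrow> 'a set \<Rightarrow> 'a set" where
  "ideal_prod I J = ideal_gen {x * y | x y. x \<in> I \<and> y \<in> J}"

fun ideal_pow :: "'a::comm_ring_1 set \<Rightarrow> nat \<Rightarrow> 'a set" where
  "ideal_pow I 0 = UNIV"
| "ideal_pow I (Suc n) = ideal_prod (ideal_pow I n) I"

definition ideal2 :: "'a::comm_ring_1 \<Rightarrow> 'a \<Rightarrow> 'a set" where
  "ideal2 b c = {b * x + c * y | x y. True}"

definition ideal3 :: "'a::comm_ring_1 \<Rightarrow> 'a \<Rightarrow> 'a \<Rightarrow> 'a set" where
  "ideal3 b c d = {b * x + c * y + d * z | x y z. True}"

text \<open>b,s,t is an A-regular sequence (standard definition):
  b is a nonzerodivisor on A, s on A/bA, t on A/(bA+sA), and A/(bA+sA+tA) \<noteq> 0.\<close>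
definition regular_seq3 :: "'a::comm_ring_1 \<Rightarrow> 'a \<Rightarrow> 'a \<Rightarrow> bool" where
  "regular_seq3 b s t \<longleftrightarrow>
     (\<forall>x. b * x = 0 \<longrightarrow> x = 0) \<and>
     (\<forall>x. s * x \<in> {b * y | y. True} \<longrightarrow> x \<in> {b * y | y. True}) \<and>
     (\<forall>x. t * x \<in> ideal2 b s \<longrightarrow> x \<in> ideal2 b s) \<and>
     ideal3 b s t \<noteq> UNIV"

end

theory Submission
  imports Defs
begin

fun Gs :: "'a::comm_ring_1 \<Rightarrow> 'a \<Rightarrow> nat \<Rightarrow> 'a set" where
  "Gs b s 0 = UNIV"
| "Gs b s (Suc n) = {b * y + s ^ (Suc n) * z | y z. y \<in> Gs b s n}"

lemma GsI: "y \<in> Gs b s n \<Longrightarrow> x = b*y + s^Suc n * z \<Longrightarrow> x \<in> Gs b s (Suc n)"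
  by (simp only: Gs.simps) blast

lemma GsE: "x \<in> Gs b s (Suc n) \<Longrightarrow> (\<And>y z. x = b*y + s^Suc n * z \<Longrightarrow> y \<in> Gs b s n \<Longrightarrow> P) \<Longrightarrow> P"
  by (simp only: Gs.simps) blast

declare Gs.simps(2)[simp del]

lemma Gs_zero: "0 \<in> Gs b s n"
proof (induction n)
  case 0 then show ?case by simp
next
  case (Suc n) then show ?case using GsI[of 0 b s n 0 0] by simp
qed

lemma Gs_add: "x \<in> Gs b s n \<Longrightarrow> y \<in> Gs b s n \<Longrightarrow> x + y \<in> Gs b s n"
proof (induction n arbitrary: x y)
  case 0 then show ?case by simp
next
  case (Suc n)
  from Suc.prems(1) obtain y1 z1 where 1: "x = b*y1 + s^Suc n * z1" "y1 \<in> Gs b s n" by (rule GsE)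
  from Suc.prems(2) obtain y2 z2 where 2: "y = b*y2 + s^Suc n * z2" "y2 \<in> Gs b s n" by (rule GsE)
  have "x + y = b*(y1+y2) + s^Suc n*(z1+z2)" using 1 2 by (simp add: algebra_simps)
  then show ?case using Suc.IH 1 2 by (blast intro: GsI)
qed

lemma Gs_mult: "x \<in> Gs b s n \<Longrightarrow> r * x \<in> Gs b s n"
proof (induction n arbitrary: x)
  case 0 then show ?case by simp
next
  case (Suc n)
  from Suc.prems obtain y1 z1 where 1: "x = b*y1 + s^Suc n * z1" "y1 \<in> Gs b s n" by (rule GsE)
  have "r * x = b*(r*y1) + s^Suc n*(r*z1)" using 1 by (simp add: algebra_simps)
  then show ?case using Suc.IH 1 by (blast intro: GsI)
qed

lemma Gs_s: "x \<in> Gs b s n \<Longrightarrow> s * x \<in> Gs b s (Suc n)"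
proof (induction n arbitrary: x)
  case 0
  show ?case using GsI[of 0 b s 0 "s*x" x] by simp
next
  case (Suc n)
  from Suc.prems obtain y1 z1 where 1: "x = b*y1 + s^Suc n * z1" "y1 \<in> Gs b s n" by (rule GsE)
  have "s * x = b*(s*y1) + s^Suc (Suc n)*z1" using 1 by (simp add: algebra_simps)
  then show ?case using Suc.IH 1 by (blast intro: GsI)
qed

lemma Gs_spow: "x \<in> Gs b s n \<Longrightarrow> s ^ k * x \<in> Gs b s (n + k)"
proof (induction k)
  case 0 then show ?case by simp
next
  case (Suc k)
  have e: "s ^ Suc k * x = s * (s ^ k * x)" by (simp add: algebra_simps)
  show ?case unfolding e add_Suc_right by (rule Gs_s[OF Suc.IH[OF Suc.prems]])
qed

lemma Gs_b: "x \<in> Gs b s n \<Longrightarrow> b * x \<in> Gs b s (Suc n)"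
proof -
  assume "x \<in> Gs b s n"
  moreover have "b * x = b * x + s ^ Suc n * 0" by simp
  ultimately show ?thesis by (rule GsI)
qed

lemma Gs1: "Gs b s 1 = ideal2 b s"
  by (auto simp: ideal2_def Gs.simps)

lemma Gs_G1: "a \<in> Gs b s 1 \<Longrightarrow> x \<in> Gs b s n \<Longrightarrow> a * x \<in> Gs b s (Suc n)"
proof -
  assume a: "a \<in> Gs b s 1" and x: "x \<in> Gs b s n"
  from a obtain u v where "a = b * u + s * v" using Gs1 unfolding ideal2_def by blast
  then have e: "a * x = b * (u * x) + s * (v * x)" by (simp add: algebra_simps)
  show ?thesis unfolding e by (rule Gs_add[OF Gs_b[OF Gs_mult[OF x]] Gs_s[OF Gs_mult[OF x]]])
qed

lemma Gs_mono: "Gs b s (Suc n) \<subseteq> Gs b s n"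
proof (induction n)
  case 0 then show ?case by simp
next
  case (Suc n)
  show ?case
  proof
    fix x assume "x \<in> Gs b s (Suc (Suc n))"
    then obtain y z where 1: "x = b*y + s^Suc (Suc n)*z" "y \<in> Gs b s (Suc n)" by (rule GsE)
    have "x = b*y + s^Suc n*(s*z)" using 1 by (simp add: algebra_simps)
    then show "x \<in> Gs b s (Suc n)" using Suc.IH 1 by (blast intro: GsI)
  qed
qed

lemma ideal_gen_sub: "0 \<in> T \<Longrightarrow> (\<And>x y. x \<in> T \<Longrightarrow> y \<in> T \<Longrightarrow> x + y \<in> T)
   \<Longrightarrow> (\<And>x r. x \<in> S \<Longrightarrow> r * x \<in> T) \<Longrightarrow> ideal_gen S \<subseteq> T"
proof
  fix x assume "x \<in> ideal_gen S" and "0 \<in> T" "(\<And>x y. x \<in> T \<Longrightarrow> y \<in> T \<Longrightarrow> x + y \<in> T)"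
    "(\<And>x r. x \<in> S \<Longrightarrow> r * x \<in> T)"
  then show "x \<in> T" by induction auto
qed

lemma ideal_gen_base: "x \<in> S \<Longrightarrow> x \<in> ideal_gen S"
  using ideal_gen.mult[of x S 1] by simp

lemma pow_eq: "ideal_pow (ideal2 b s) n = Gs b s n"
proof (induction n)
  case 0 then show ?case by simp
next
  case (Suc n)
  have "ideal_prod (Gs b s n) (ideal2 b s) = Gs b s (Suc n)"
  proof
    show "ideal_prod (Gs b s n) (ideal2 b s) \<subseteq> Gs b s (Suc n)"
      unfolding ideal_prod_def
    proof (rule ideal_gen_sub)
      show "0 \<in> Gs b s (Suc n)" by (rule Gs_zero)
      show "\<And>x y. x \<in> Gs b s (Suc n) \<Longrightarrow> y \<in> Gs b s (Suc n) \<Longrightarrow> x + y \<in> Gs b s (Suc n)"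
        by (rule Gs_add)
      fix x r assume "x \<in> {x * y |x y. x \<in> Gs b s n \<and> y \<in> ideal2 b s}"
      then obtain u v where uv: "x = u * v" "u \<in> Gs b s n" "v \<in> Gs b s 1" using Gs1 by blast
      have "r * (v * u) \<in> Gs b s (Suc n)" by (rule Gs_mult[OF Gs_G1[OF uv(3) uv(2)]])
      then show "r * x \<in> Gs b s (Suc n)" using uv(1) by (simp add: mult.commute)
    qed
  next
    show "Gs b s (Suc n) \<subseteq> ideal_prod (Gs b s n) (ideal2 b s)"
    proof
      fix x assume "x \<in> Gs b s (Suc n)"
      then obtain y z where x: "x = b*y + s^Suc n*z" "y \<in> Gs b s n" by (rule GsE)
      have sn: "s ^ n * z \<in> Gs b s n" using Gs_spow[of z b s 0 n] by simp
      have "b = b*1 + s*0" "s = b*0 + s*1" by simp_all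
      then have "b \<in> ideal2 b s" "s \<in> ideal2 b s" unfolding ideal2_def by blast+
      have A: "y * b \<in> ideal_prod (Gs b s n) (ideal2 b s)" unfolding ideal_prod_def
        using x(2) \<open>b \<in> ideal2 b s\<close> by (blast intro: ideal_gen_base)
      have B: "(s^n*z) * s \<in> ideal_prod (Gs b s n) (ideal2 b s)" unfolding ideal_prod_def
        using sn \<open>s \<in> ideal2 b s\<close> by (blast intro: ideal_gen_base)
      have C: "x = y * b + (s^n*z) * s" using x by (simp add: algebra_simps)
      show "x \<in> ideal_prod (Gs b s n) (ideal2 b s)"
        unfolding C using A B unfolding ideal_prod_def by (rule ideal_gen.add)
    qed
  qed
  then show ?case using Suc by simp
qed

lemma W_eq_Gs:
  assumes "\<And>n x. t * x \<in> Gs b s n \<Longrightarrow> x \<in> Gs b s n"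
  shows "Wseq b s t n = Gs b s n"
proof (induction n)
  case 0 then show ?case by simp
next
  case (Suc n)
  have "colon (Wseq b s t n) t = {x. t * x \<in> Gs b s n}"
    using Suc.IH by (simp add: colon_def)
  also have "\<dots> = Gs b s n"
  proof
    show "{x. t * x \<in> Gs b s n} \<subseteq> Gs b s n" using assms by blast
    show "Gs b s n \<subseteq> {x. t * x \<in> Gs b s n}" using Gs_mult[of _ b s n t] by blast
  qed
  finally have "colon (Wseq b s t n) t = Gs b s n" .
  then show ?case by (simp add: Gs.simps)
qed

lemma part_a:
  assumes "t \<in> (\<Inter>i. ideal2 b (s ^ i))"
  shows "Wseq b s t n = ideal2 b (s ^ n)"
proof (induction n)
  case 0
  have "x \<in> ideal2 b (s^0)" for x unfolding ideal2_def by (rule CollectI, rule exI[of _ 0], rule exI[of _ x]) simp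
  then show ?case by auto
next
  case (Suc n)
  have "t * x \<in> ideal2 b (s ^ n)" for x
  proof -
    from assms obtain u v where "t = b * u + s^n * v" unfolding ideal2_def by blast
    then have "t * x = b * (u*x) + s^n * (v*x)" by (simp add: algebra_simps)
    then show ?thesis unfolding ideal2_def by blast
  qed
  then have "colon (Wseq b s t n) t = UNIV" using Suc by (auto simp: colon_def)
  then show ?case by (auto simp: ideal2_def)
qed

lemma s_iter:
  fixes s b :: "'a::comm_ring_1"
  assumes "\<forall>x. s * x \<in> {b * y | y. True} \<longrightarrow> x \<in> {b * y | y. True}"
  shows "s ^ k * x \<in> {b * y | y. True} \<Longrightarrow> x \<in> {b * y | y. True}"
proof (induction k arbitrary: x)
  case 0
  then obtain y where "s ^ 0 * x = b * y" by blast
  then have "x = b * y" by simp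
  then show ?case by blast
next
  case (Suc k)
  have "s ^ k * (s * x) \<in> {b * y | y. True}" using Suc.prems by (simp add: algebra_simps)
  then show ?case using Suc.IH assms by blast
qed

lemma QR:
  assumes bnz: "\<forall>x. b * x = 0 \<longrightarrow> x = 0"
    and sreg: "\<forall>x. s * x \<in> {b * y | y. True} \<longrightarrow> x \<in> {b * y | y. True}"
    and h: "b * y + s ^ Suc m * z \<in> Gs b s (Suc (Suc m))"
  shows "z \<in> Gs b s 1 \<and> y \<in> Gs b s (Suc m)"
proof -
  from h obtain y' z' where e: "b * y + s ^ Suc m * z = b * y' + s ^ Suc (Suc m) * z'"
     and y': "y' \<in> Gs b s (Suc m)" by (rule GsE)
  have e2: "s ^ Suc m * (s * z' - z) = b * (y - y')" using e by (simp add: algebra_simps)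
  then have "s ^ Suc m * (s * z' - z) \<in> {b * y | y. True}" by blast
  then obtain w where w: "s * z' - z = b * w" using s_iter[OF sreg] by blast
  have z: "z = b * (- w) + s * z'" using w by (simp add: algebra_simps)
  have "b * (y - y') = b * (s ^ Suc m * w)" using e2 w by (simp add: algebra_simps)
  then have "b * (y - y' - s ^ Suc m * w) = 0"
    by (simp add: right_diff_distrib)
  then have "y - y' - s ^ Suc m * w = 0" using bnz by blast
  then have yy: "y = y' + s ^ Suc m * w" by (simp add: algebra_simps)
  have "s ^ Suc m * w \<in> Gs b s (Suc m)" using Gs_spow[of w b s 0 "Suc m"] by simp
  then have "y \<in> Gs b s (Suc m)" unfolding yy by (rule Gs_add[OF y'])
  moreover have "z \<in> Gs b s 1" unfolding Gs1 ideal2_def using z by blast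
  ultimately show ?thesis by simp
qed

lemma D_unit:
  assumes "ideal3 b s t = UNIV"
  shows "t * x \<in> Gs b s n \<Longrightarrow> x \<in> Gs b s n"
proof (induction n arbitrary: x)
  case 0 then show ?case by simp
next
  case (Suc n)
  have "1 \<in> ideal3 b s t" using assms by simp
  then obtain x0 y0 z0 where one: "1 = b * x0 + s * y0 + t * z0"
    unfolding ideal3_def by blast
  have xn: "x \<in> Gs b s n" using Suc Gs_mono by blast
  have a: "b * x0 + s * y0 \<in> Gs b s 1" unfolding Gs1 ideal2_def by blast
  have "x = x * 1" by simp
  also have "\<dots> = (b * x0 + s * y0) * x + z0 * (t * x)"
    by (subst one) (simp add: algebra_simps)
  finally have e: "x = (b * x0 + s * y0) * x + z0 * (t * x)" .
  show ?case by (subst e) (rule Gs_add[OF Gs_G1[OF a xn] Gs_mult[OF Suc.prems]])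
qed

lemma D_reg:
  assumes "regular_seq3 b s t"
  shows "t * x \<in> Gs b s n \<Longrightarrow> x \<in> Gs b s n"
proof (induction n arbitrary: x)
  case 0 then show ?case by simp
next
  case (Suc n)
  have bnz: "\<forall>x. b * x = 0 \<longrightarrow> x = 0"
    and sreg: "\<forall>x. s * x \<in> {b * y | y. True} \<longrightarrow> x \<in> {b * y | y. True}"
    and treg: "\<forall>x. t * x \<in> ideal2 b s \<longrightarrow> x \<in> ideal2 b s"
    using assms unfolding regular_seq3_def by auto
  have xn: "x \<in> Gs b s n" using Suc Gs_mono by blast
  show ?case
  proof (cases n)
    case 0
    then have "t * x \<in> Gs b s 1" using Suc.prems by simp
    then have "t * x \<in> ideal2 b s" by (simp only: Gs1)
    then have "x \<in> ideal2 b s" using treg by blast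
    then have "x \<in> Gs b s 1" by (simp only: Gs1)
    then show ?thesis using \<open>n = 0\<close> by simp
  next
    case (Suc m)
    with xn have "x \<in> Gs b s (Suc m)" by simp
    then obtain y z where x: "x = b * y + s ^ Suc m * z" "y \<in> Gs b s m" by (rule GsE)
    have "t * x = b * (t * y) + s ^ Suc m * (t * z)" using x by (simp add: algebra_simps)
    then have "b * (t * y) + s ^ Suc m * (t * z) \<in> Gs b s (Suc (Suc m))"
      using Suc.prems \<open>n = Suc m\<close> by simp
    then have q: "t * z \<in> Gs b s 1 \<and> t * y \<in> Gs b s (Suc m)" by (rule QR[OF bnz sreg])
    then have "t * z \<in> ideal2 b s" by (simp only: Gs1)
    then have "z \<in> ideal2 b s" using treg by blast
    then have z1: "z \<in> Gs b s 1" by (simp only: Gs1)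
    have "y \<in> Gs b s (Suc m)" using Suc.IH q \<open>n = Suc m\<close> by simp
    note zy = z1 this
    have "b * y \<in> Gs b s (Suc n)" "s ^ Suc m * z \<in> Gs b s (Suc n)"
      using Gs_b[of y b s "Suc m"] Gs_spow[of z b s 1 "Suc m"] \<open>n = Suc m\<close> zy by simp_all
    then show ?thesis unfolding x(1) by (rule Gs_add)
  qed
qed

theorem lemma3p4:
  fixes b s t :: "'a::comm_ring_1"
  shows "(t \<in> (\<Inter>i. ideal2 b (s ^ i)) \<longrightarrow> Wbst b s t = (\<Inter>i. ideal2 b (s ^ i)))
       \<and> ((ideal3 b s t = UNIV \<or> regular_seq3 b s t)
            \<longrightarrow> Wbst b s t = (\<Inter>i. ideal_pow (ideal2 b s) i))"
proof (intro conjI impI)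
  assume h: "t \<in> (\<Inter>i. ideal2 b (s ^ i))"
  show "Wbst b s t = (\<Inter>i. ideal2 b (s ^ i))"
    unfolding Wbst_def using part_a[OF h] by simp
next
  assume h: "ideal3 b s t = UNIV \<or> regular_seq3 b s t"
  have "\<And>n x. t * x \<in> Gs b s n \<Longrightarrow> x \<in> Gs b s n"
    using h D_unit D_reg by blast
  then have "Wseq b s t n = ideal_pow (ideal2 b s) n" for n
    using W_eq_Gs[of t b s n] pow_eq[of b s n] by simp
  then show "Wbst b s t = (\<Inter>i. ideal_pow (ideal2 b s) i)"
    unfolding Wbst_def by simp
qed

end
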